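(* For all $t>0$, the limit $$P'_{*,-}(t):=\lim_{s\uparrow t}\frac{P_*(t)-P_*(s)}{t-s}$$ exists and belongs to $[-\tau_{\max},-\tau_{\min}]$.
   Context: Setting: $Q=\mathbb{T}^2\setminus\bigcup_i\mathcal{O}_i$ is a Sinai billiard table (finitely many pairwise disjoint convex closed domains $\mathcal{O}_i$ in the two-torus with $C^3$ boundaries of strictly positive curvature) with finite horizon (no trajectory makes only tangential collisions). $T:M\to M$, $M=\partial Q\times[-\pi/2,\pi/2]$ (coordinates $(r,\varphi)$), is the billiard map, $\tau(x)$ the free flight time from $x$ to $T(x)$, $\tau_{\min}=\inf\tau>0$, $\tau_{\max}=\sup\tau<\infty$, $\Sigma_n\tau=\sum_{k=0}^{n-1}\tau\circ T^k$. $\mathcal{S}_0=\{\varphi=\pm\pi/2\}$ and for $n\ge1$, $\mathcal{S}_n=\bigcup_{i=-n}^{0}T^i\mathcal{S}_0$; $\mathcal{M}_0^n$ is the set of maximal connected components of $M\setminus\mathcal{S}_n$. For $t\ge0$, $Q_n(t)=\sum_{A\in\mathcal{M}_0^n}\sup_Ae^{-t\Sigma_n\tau}$ and $P_*(t)=\lim_{n\to\infty}\frac1n\log Q_n(t)$ (the limit exists and $t\mapsto P_*(t)$ is convex). *)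

theory Defs
  imports "HOL-Analysis.Analysis"
begin

text \<open>Abstract rendering of the billiard objects. M is the phase space, T the
billiard map, tau the free flight time, S0 the set {phi = +-pi/2}.\<close>

text \<open>S_n = union over i = -n..0 of T^i S_0, i.e. the points x with T^k x in S_0 for some 0 <= k <= n.\<close>
definition sing_set :: "('a \<Rightarrow> 'a) \<Rightarrow> 'a set \<Rightarrow> 'a set \<Rightarrow> nat \<Rightarrow> 'a set" where
  "sing_set T M S0 n = (\<Union>k\<in>{0..n}. {x \<in> M. (T ^^ k) x \<in> S0})"

definition cells :: "('a \<Rightarrow> 'a) \<Rightarrow> 'a::topological_space set \<Rightarrow> 'a set \<Rightarrow> nat \<Rightarrow> 'a set set" where
  "cells T M S0 n = components (M - sing_set T M S0 n)"

definition birkhoff_sum :: "('a \<Rightarrow> 'a) \<Rightarrow> ('a \<Rightarrow> real) \<Rightarrow> nat \<Rightarrow> 'a \<Rightarrow> real" where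
  "birkhoff_sum T tau n x = (\<Sum>k<n. tau ((T ^^ k) x))"

definition Qn :: "('a \<Rightarrow> 'a) \<Rightarrow> ('a \<Rightarrow> real) \<Rightarrow> 'a::topological_space set \<Rightarrow> 'a set \<Rightarrow> nat \<Rightarrow> real \<Rightarrow> real" where
  "Qn T tau M S0 n t = (\<Sum>A\<in>cells T M S0 n. (SUP x\<in>A. exp (- t * birkhoff_sum T tau n x)))"

definition Pstar :: "('a \<Rightarrow> 'a) \<Rightarrow> ('a \<Rightarrow> real) \<Rightarrow> 'a::topological_space set \<Rightarrow> 'a set \<Rightarrow> real \<Rightarrow> real" where
  "Pstar T tau M S0 t = lim (\<lambda>n. ln (Qn T tau M S0 n t) / real n)"

end

theory Submission
  imports Defs
begin

lemma iter_in: "x \<in> M \<Longrightarrow> T ` M \<subseteq> M \<Longrightarrow> (T ^^ k) x \<in> M"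
  by (induction k) auto

lemma bs_bounds:
  assumes "x \<in> M" "T ` M \<subseteq> M" "bdd_below (tau ` M)" "bdd_above (tau ` M)"
  shows "real n * Inf (tau ` M) \<le> birkhoff_sum T tau n x \<and> birkhoff_sum T tau n x \<le> real n * Sup (tau ` M)"
proof -
  have "\<And>k. Inf (tau ` M) \<le> tau ((T ^^ k) x)" "\<And>k. tau ((T ^^ k) x) \<le> Sup (tau ` M)"
    using iter_in[OF assms(1,2)] assms(3,4) by (auto intro: cInf_lower cSup_upper)
  then show ?thesis unfolding birkhoff_sum_def
    using sum_bounded_below[of "{..<n}" "Inf (tau ` M)" "\<lambda>k. tau ((T ^^ k) x)"]
      sum_bounded_above[of "{..<n}" "\<lambda>k. tau ((T ^^ k) x)" "Sup (tau ` M)"] by auto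
qed

lemma bdd_exp:
  fixes S :: "'a \<Rightarrow> real"
  assumes "\<And>x. x \<in> A \<Longrightarrow> lo \<le> S x" "r \<ge> 0"
  shows "bdd_above ((\<lambda>x. exp (- r * S x)) ` A)"
proof (rule bdd_aboveI2[of _ _ "exp (- r * lo)"])
  fix x assume "x \<in> A"
  then have "- r * S x \<le> - r * lo" using assms by (simp add: mult_left_mono)
  then show "exp (- r * S x) \<le> exp (- r * lo)" by simp
qed

lemma sup_scale:
  fixes S :: "'a \<Rightarrow> real"
  assumes ne: "A \<noteq> {}" and b: "\<And>x. x \<in> A \<Longrightarrow> lo \<le> S x \<and> S x \<le> hi" and st: "0 \<le> s" "s \<le> t"
  shows "exp (-(t-s)*hi) * (SUP x\<in>A. exp (- s * S x)) \<le> (SUP x\<in>A. exp (- t * S x))"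
    and "(SUP x\<in>A. exp (- t * S x)) \<le> exp (-(t-s)*lo) * (SUP x\<in>A. exp (- s * S x))"
proof -
  have bs: "bdd_above ((\<lambda>x. exp (- s * S x)) ` A)" and bt: "bdd_above ((\<lambda>x. exp (- t * S x)) ` A)"
    using bdd_exp[of A lo S] b st by auto
  have eq: "exp (- t * S x) = exp (-(t-s) * S x) * exp (- s * S x)" for x
    by (simp flip: exp_add add: algebra_simps)
  have "(SUP x\<in>A. exp (- s * S x)) \<le> (SUP x\<in>A. exp (- t * S x)) / exp (-(t-s)*hi)"
  proof (rule cSUP_least[OF ne])
    fix x assume x: "x \<in> A"
    have "(s-t)*hi \<le> (s-t) * S x" by (rule mult_left_mono_neg) (use b[OF x] st in auto)
    then have "-(t-s)*hi \<le> -(t-s) * S x" by simp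
    then have "exp (-(t-s)*hi) * exp (- s * S x) \<le> exp (- t * S x)"
      unfolding eq by (intro mult_right_mono) auto
    also have "\<dots> \<le> (SUP x\<in>A. exp (- t * S x))" by (rule cSUP_upper[OF x bt])
    finally show "exp (- s * S x) \<le> (SUP x\<in>A. exp (- t * S x)) / exp (-(t-s)*hi)"
      by (simp add: field_simps)
  qed
  then show "exp (-(t-s)*hi) * (SUP x\<in>A. exp (- s * S x)) \<le> (SUP x\<in>A. exp (- t * S x))"
    by (simp add: field_simps)
  show "(SUP x\<in>A. exp (- t * S x)) \<le> exp (-(t-s)*lo) * (SUP x\<in>A. exp (- s * S x))"
  proof (rule cSUP_least[OF ne])
    fix x assume x: "x \<in> A"
    have "(s-t)*S x \<le> (s-t) * lo" by (rule mult_left_mono_neg) (use b[OF x] st in auto)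
    then have "-(t-s) * S x \<le> -(t-s)*lo" by simp
    then have "exp (- t * S x) \<le> exp (-(t-s)*lo) * exp (- s * S x)"
      unfolding eq by (intro mult_right_mono) auto
    also have "\<dots> \<le> exp (-(t-s)*lo) * (SUP x\<in>A. exp (- s * S x))"
      by (intro mult_left_mono cSUP_upper[OF x bs]) auto
    finally show "exp (- t * S x) \<le> exp (-(t-s)*lo) * (SUP x\<in>A. exp (- s * S x))" .
  qed
qed

lemma sup_holder:
  fixes S :: "'a \<Rightarrow> real"
  assumes ne: "A \<noteq> {}" and b: "\<And>x. x \<in> A \<Longrightarrow> lo \<le> S x" and su: "0 \<le> s" "0 \<le> u"
    and w: "0 \<le> w" "w \<le> 1"
  shows "(SUP x\<in>A. exp (- (w * s + (1 - w) * u) * S x)) \<le>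
     (SUP x\<in>A. exp (- s * S x)) powr w * (SUP x\<in>A. exp (- u * S x)) powr (1-w)"
proof (rule cSUP_least[OF ne])
  fix x assume x: "x \<in> A"
  have bs: "bdd_above ((\<lambda>x. exp (- s * S x)) ` A)" and bu: "bdd_above ((\<lambda>x. exp (- u * S x)) ` A)"
    using bdd_exp[of A lo S] b su by auto
  have "exp (- (w * s + (1 - w) * u) * S x) = exp (- s * S x) powr w * exp (- u * S x) powr (1-w)"
    by (simp add: powr_def flip: exp_add add: algebra_simps)
  also have "\<dots> \<le> (SUP x\<in>A. exp (- s * S x)) powr w * (SUP x\<in>A. exp (- u * S x)) powr (1-w)"
    using w by (intro mult_mono powr_mono2 cSUP_upper[OF x bs] cSUP_upper[OF x bu]) auto
  finally show "exp (- (w * s + (1 - w) * u) * S x) \<le> \<dots>" .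
qed

lemma sum_holder:
  fixes x y :: "'b \<Rightarrow> real"
  assumes fin: "finite I" "I \<noteq> {}" and pos: "\<And>i. i \<in> I \<Longrightarrow> x i > 0 \<and> y i > 0"
    and w: "0 \<le> w" "w \<le> 1"
  shows "(\<Sum>i\<in>I. x i powr w * y i powr (1-w)) \<le> (\<Sum>i\<in>I. x i) powr w * (\<Sum>i\<in>I. y i) powr (1-w)"
proof -
  define X where "X = (\<Sum>i\<in>I. x i)"
  define Y where "Y = (\<Sum>i\<in>I. y i)"
  have X: "X > 0" unfolding X_def using fin pos by (intro sum_pos) auto
  have Y: "Y > 0" unfolding Y_def using fin pos by (intro sum_pos) auto
  have c: "X powr w * Y powr (1-w) > 0" using X Y by simp
  have "(\<Sum>i\<in>I. x i powr w * y i powr (1-w)) / (X powr w * Y powr (1-w))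
      = (\<Sum>i\<in>I. (x i / X) powr w * (y i / Y) powr (1-w))"
    using X Y pos by (simp add: sum_divide_distrib powr_divide)
  also have "\<dots> \<le> (\<Sum>i\<in>I. w * (x i / X) + (1-w) * (y i / Y))"
    using pos X Y w by (intro sum_mono Youngs_inequality_0) auto
  also have "\<dots> = w * ((\<Sum>i\<in>I. x i) / X) + (1-w) * ((\<Sum>i\<in>I. y i) / Y)"
    by (simp add: sum.distrib sum_distrib_left sum_divide_distrib)
  also have "\<dots> = 1" using X Y unfolding X_def Y_def by simp
  finally show ?thesis using c unfolding X_def Y_def by (simp add: divide_le_eq)
qed


theorem lemma3p4:
  fixes M :: "'a::topological_space set" and T :: "'a \<Rightarrow> 'a"
    and tau :: "'a \<Rightarrow> real" and S0 :: "'a set" and t :: real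
  assumes "M \<noteq> {}" and "T ` M \<subseteq> M" and "S0 \<subseteq> M"
    and "bdd_below (tau ` M)" and "bdd_above (tau ` M)"
    and "Inf (tau ` M) > 0"
    and "\<And>n. finite (cells T M S0 n)"
    and "\<And>n. cells T M S0 n \<noteq> {}"
    and "\<And>s. s \<ge> 0 \<Longrightarrow> convergent (\<lambda>n. ln (Qn T tau M S0 n s) / real n)"
    and "t > 0"
  shows "\<exists>L. ((\<lambda>s. (Pstar T tau M S0 t - Pstar T tau M S0 s) / (t - s)) \<longlongrightarrow> L) (at_left t)
             \<and> L \<in> {- Sup (tau ` M) .. - Inf (tau ` M)}"
proof -
  define lo where "lo = Inf (tau ` M)"
  define hi where "hi = Sup (tau ` M)"
  define Q where "Q = (\<lambda>n s. Qn T tau M S0 n s)"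
  define P where "P = Pstar T tau M S0"
  define B where "B = (\<lambda>n. birkhoff_sum T tau n)"
  note fin = assms(7) and cne = assms(8)
  have cell: "A \<subseteq> M" "A \<noteq> {}" if "A \<in> cells T M S0 n" for A n
    using that unfolding cells_def using in_components_subset in_components_nonempty by auto
  have Bb: "real n * lo \<le> B n x \<and> B n x \<le> real n * hi" if "x \<in> A" "A \<in> cells T M S0 n" for x A n
    using bs_bounds[of x M T tau n] cell[OF that(2)] that(1) assms(2,4,5)
    unfolding lo_def hi_def B_def by auto
  have Qdef: "Q n s = (\<Sum>A\<in>cells T M S0 n. (SUP x\<in>A. exp (- s * B n x)))" for n s
    unfolding Q_def Qn_def B_def by simp
  have supos: "(SUP x\<in>A. exp (- s * B n x)) > 0" if "A \<in> cells T M S0 n" "s \<ge> 0" for A n s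
  proof -
    obtain x where x: "x \<in> A" using cell(2)[OF \<open>A \<in> cells T M S0 n\<close>] by auto
    have "bdd_above ((\<lambda>x. exp (- s * B n x)) ` A)"
      using bdd_exp[of A "real n * lo" "B n" s] Bb[OF _ that(1)] that(2) by auto
    then have "exp (- s * B n x) \<le> (SUP x\<in>A. exp (- s * B n x))" by (rule cSUP_upper[OF x])
    then show ?thesis by (smt (verit) exp_gt_zero)
  qed
  have Qpos: "Q n s > 0" if "s \<ge> 0" for n s
    unfolding Qdef using fin cne supos that by (intro sum_pos) auto
  have Qsc: "exp (-(t'-s)*(real n*hi)) * Q n s \<le> Q n t' \<and> Q n t' \<le> exp (-(t'-s)*(real n*lo)) * Q n s"
    if "0 \<le> s" "s \<le> t'" for n s t'
  proof -
    have "exp (-(t'-s)*(real n*hi)) * Q n s = (\<Sum>A\<in>cells T M S0 n. exp (-(t'-s)*(real n*hi)) * (SUP x\<in>A. exp (- s * B n x)))"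
      unfolding Qdef by (simp add: sum_distrib_left)
    also have "\<dots> \<le> Q n t'" unfolding Qdef
      by (intro sum_mono sup_scale(1)[where lo = "real n * lo"]) (use cell Bb that in auto)
    finally have 1: "exp (-(t'-s)*(real n*hi)) * Q n s \<le> Q n t'" .
    have "Q n t' \<le> (\<Sum>A\<in>cells T M S0 n. exp (-(t'-s)*(real n*lo)) * (SUP x\<in>A. exp (- s * B n x)))"
      unfolding Qdef
      by (intro sum_mono sup_scale(2)[where hi = "real n * hi"]) (use cell Bb that in auto)
    also have "\<dots> = exp (-(t'-s)*(real n*lo)) * Q n s"
      unfolding Qdef by (simp add: sum_distrib_left)
    finally show ?thesis using 1 by simp
  qed
  have lnsc: "-(t'-s)*hi \<le> ln (Q n t') / real n - ln (Q n s) / real n \<and>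
              ln (Q n t') / real n - ln (Q n s) / real n \<le> -(t'-s)*lo"
    if "0 \<le> s" "s \<le> t'" "n \<ge> 1" for n s t'
  proof -
    have qs: "Q n s > 0" "Q n t' > 0" using Qpos that by auto
    from Qsc[OF that(1,2), of n] have
      "ln (exp (-(t'-s)*(real n*hi)) * Q n s) \<le> ln (Q n t')"
      "ln (Q n t') \<le> ln (exp (-(t'-s)*(real n*lo)) * Q n s)"
      using qs by (simp_all del: ln_mult)
    then have a: "-(t'-s)*(real n*hi) + ln (Q n s) \<le> ln (Q n t')"
       and b: "ln (Q n t') \<le> -(t'-s)*(real n*lo) + ln (Q n s)"
      using qs by (simp_all add: ln_mult)
    have n: "real n > 0" using that by simp
    have "-(t'-s)*hi = (-(t'-s)*(real n*hi)) / real n" using n by simp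
    also have "\<dots> \<le> (ln (Q n t') - ln (Q n s)) / real n"
      using a n by (intro divide_right_mono) auto
    finally have A: "-(t'-s)*hi \<le> ln (Q n t') / real n - ln (Q n s) / real n"
      by (simp add: diff_divide_distrib)
    have "(ln (Q n t') - ln (Q n s)) / real n \<le> (-(t'-s)*(real n*lo)) / real n"
      using b n by (intro divide_right_mono) auto
    also have "\<dots> = -(t'-s)*lo" using n by simp
    finally have "ln (Q n t') / real n - ln (Q n s) / real n \<le> -(t'-s)*lo"
      by (simp add: diff_divide_distrib)
    with A show ?thesis by simp
  qed
  have lim: "(\<lambda>n. ln (Q n s) / real n) \<longlonglongrightarrow> P s" if "s \<ge> 0" for s
    using assms(9)[OF that] unfolding convergent_LIMSEQ_iff P_def Pstar_def Q_def .
  have Psc: "-(t'-s)*hi \<le> P t' - P s \<and> P t' - P s \<le> -(t'-s)*lo" if "0 \<le> s" "s \<le> t'" for s t'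
  proof -
    have L: "(\<lambda>n. ln (Q n t') / real n - ln (Q n s) / real n) \<longlonglongrightarrow> P t' - P s"
      using lim that by (intro tendsto_diff) auto
    have ev: "eventually (\<lambda>n. -(t'-s)*hi \<le> ln (Q n t') / real n - ln (Q n s) / real n \<and>
              ln (Q n t') / real n - ln (Q n s) / real n \<le> -(t'-s)*lo) sequentially"
      using eventually_ge_at_top[of "1::nat"] by eventually_elim (use lnsc that in blast)
    show ?thesis
    proof
      show "-(t'-s)*hi \<le> P t' - P s"
        by (rule tendsto_lowerbound[OF L]) (use ev in \<open>auto elim: eventually_mono\<close>)
      show "P t' - P s \<le> -(t'-s)*lo"
        by (rule tendsto_upperbound[OF L]) (use ev in \<open>auto elim: eventually_mono\<close>)
    qed
  qed
  have Qcvx: "Q n (w * s + (1 - w) * u) \<le> Q n s powr w * Q n u powr (1-w)"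
    if "0 \<le> s" "0 \<le> u" "0 \<le> w" "w \<le> 1" for n s u w
  proof -
    have "Q n (w * s + (1 - w) * u) \<le> (\<Sum>A\<in>cells T M S0 n.
        (SUP x\<in>A. exp (- s * B n x)) powr w * (SUP x\<in>A. exp (- u * B n x)) powr (1-w))"
      unfolding Qdef
      by (intro sum_mono sup_holder[where lo = "real n * lo"]) (use cell Bb that in auto)
    also have "\<dots> \<le> Q n s powr w * Q n u powr (1-w)"
      unfolding Qdef using fin cne supos that by (intro sum_holder) auto
    finally show ?thesis .
  qed
  have Pcvx: "P (w * s + (1 - w) * u) \<le> w * P s + (1-w) * P u"
    if "0 \<le> s" "0 \<le> u" "0 \<le> w" "w \<le> 1" for s u w
  proof -
    have m: "0 \<le> w * s + (1 - w) * u" using that by simp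
    have ineq: "ln (Q n (w * s + (1 - w) * u)) / real n \<le> w * (ln (Q n s) / real n) + (1-w) * (ln (Q n u) / real n)" for n
    proof -
      have qs: "Q n s > 0" "Q n u > 0" "Q n (w * s + (1 - w) * u) > 0" using Qpos that m by auto
      have "ln (Q n (w * s + (1 - w) * u)) \<le> ln (Q n s powr w * Q n u powr (1-w))"
        using Qcvx[OF that, of n] qs by simp
      also have "\<dots> = w * ln (Q n s) + (1-w) * ln (Q n u)"
        using qs by (simp add: ln_mult ln_powr)
      finally have "ln (Q n (w * s + (1 - w) * u)) \<le> w * ln (Q n s) + (1-w) * ln (Q n u)" .
      then have "ln (Q n (w * s + (1 - w) * u)) / real n \<le> (w * ln (Q n s) + (1-w) * ln (Q n u)) / real n"
        by (intro divide_right_mono) auto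
      then show ?thesis by (simp add: add_divide_distrib)
    qed
    show ?thesis
    proof (rule tendsto_le[OF _ _ lim[OF m]])
      show "(\<lambda>n. w * (ln (Q n s) / real n) + (1-w) * (ln (Q n u) / real n)) \<longlonglongrightarrow> w * P s + (1-w) * P u"
        using lim that by (intro tendsto_intros) auto
      show "eventually (\<lambda>n. ln (Q n (w * s + (1 - w) * u)) / real n \<le> w * (ln (Q n s) / real n) + (1-w) * (ln (Q n u) / real n)) sequentially"
        using ineq by simp
    qed simp
  qed
  have cvx: "convex_on {0<..} P"
  proof (rule convex_onI)
    fix w x y :: real assume h: "0 < w" "w < 1" "x \<in> {0<..}" "y \<in> {0<..}"
    have "P ((1 - w) * x + (1 - (1 - w)) * y) \<le> (1 - w) * P x + (1 - (1 - w)) * P y"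
      using h by (intro Pcvx) auto
    then show "P ((1 - w) *\<^sub>R x + w *\<^sub>R y) \<le> (1 - w) * P x + w * P y"
      by (simp add: algebra_simps)
  qed simp
  define g where "g = (\<lambda>s. (P t - P s) / (t - s))"
  have gswap: "g a = (P a - P t) / (a - t)" for a
    unfolding g_def by (metis minus_diff_eq minus_divide_divide)
  have gb: "- hi \<le> g s \<and> g s \<le> - lo" if "0 \<le> s" "s < t" for s
  proof -
    have d: "t - s > 0" using that by simp
    from Psc[of s t] that have "-(t-s)*hi \<le> P t - P s" "P t - P s \<le> -(t-s)*lo" by auto
    then show ?thesis unfolding g_def using d
      by (simp add: pos_le_divide_eq pos_divide_le_eq algebra_simps)
  qed
  have gmono: "g a \<le> g b" if "a \<in> {0<..}" "b \<in> {0<..}" "b < t" "a \<le> b" for a b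
  proof (cases "a = b")
    case False
    then have "a < b" using that by simp
    from convex_on_slope_le(2)[OF cvx _ _ this \<open>b < t\<close>] that assms(10)
    show ?thesis unfolding gswap by simp
  qed simp
  have LB: "(g \<longlongrightarrow> Sup (g ` ({..<t} \<inter> {0<..}))) (at t within ({..<t} \<inter> {0<..}))"
    by (rule Lim_left_bound[where K = "- lo"]) (use gmono gb in auto)
  have "at t within ({..<t} \<inter> {0<..}) = at_left t"
    by (rule at_within_nhd[of t "{0<..}"]) (use assms(10) in auto)
  with LB have LB': "(g \<longlongrightarrow> Sup (g ` ({..<t} \<inter> {0<..}))) (at_left t)" by simp
  have evg: "eventually (\<lambda>s. - hi \<le> g s \<and> g s \<le> - lo) (at_left t)"
  proof -
    have "eventually (\<lambda>s. s \<in> {0<..<t}) (at_left t)"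
      using eventually_at_left_real[OF assms(10)] .
    then show ?thesis by eventually_elim (use gb in auto)
  qed
  have "- hi \<le> Sup (g ` ({..<t} \<inter> {0<..}))"
    by (rule tendsto_lowerbound[OF LB']) (use evg in \<open>auto elim: eventually_mono\<close>)
  moreover have "Sup (g ` ({..<t} \<inter> {0<..})) \<le> - lo"
    by (rule tendsto_upperbound[OF LB']) (use evg in \<open>auto elim: eventually_mono\<close>)
  ultimately have "Sup (g ` ({..<t} \<inter> {0<..})) \<in> {- hi .. - lo}" by simp
  with LB' show ?thesis unfolding g_def P_def lo_def hi_def by blast
qed

end
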